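(* Let $C\le A$ be groups. An element $a\in A\setminus C$ is $2$-RF rel $C$ if and only if $aCa^{-1}\cap C=\{\mathrm{id}\}$. Consequently $(A,C)$ is $2$-RF if and only if $C$ is malnormal in $A$; in particular, if $(A,C)$ is $n$-RF for some $2\le n\le\infty$, then $C$ is malnormal in $A$.
   Context: For a group $G$, subgroup $D$, and $2\le n\le\infty$: $a\in G\setminus D$ is $n$-RF rel $D$ if $a^{e_1}d_1\cdots a^{e_k}d_k\ne\mathrm{id}$ for all $k\ge1$, $e_i\in\{\pm1\}$, $d_i\in D$ such that $d_i\ne\mathrm{id}$ whenever $e_i=-e_{i+1}$ (indices mod $k$), and fewer than $n$ of the $e_i$ are $+1$ and fewer than $n$ are $-1$. The pair $(G,D)$ is $n$-RF if every element of $G\setminus D$ is $n$-RF rel $D$. $C$ is malnormal in $A$ if $aCa^{-1}\cap C=\{\mathrm{id}\}$ for all $a\in A\setminus C$. *)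

theory Defs
  imports "HOL-Algebra.Group" "HOL-Library.Extended_Nat"
begin

text \<open>A word a^{e_1} d_1 ... a^{e_k} d_k is encoded as a list of pairs (e_i, d_i),
  where e_i = True means exponent +1 and e_i = False means exponent -1.\<close>

definition word_prod :: "('a, 'b) monoid_scheme \<Rightarrow> 'a \<Rightarrow> (bool \<times> 'a) list \<Rightarrow> 'a" where
  "word_prod G a ws =
     foldr (\<lambda>(e, d) acc. (if e then a else inv\<^bsub>G\<^esub> a) \<otimes>\<^bsub>G\<^esub> d \<otimes>\<^bsub>G\<^esub> acc) ws \<one>\<^bsub>G\<^esub>"

definition admissible_word ::
    "('a, 'b) monoid_scheme \<Rightarrow> 'a set \<Rightarrow> enat \<Rightarrow> (bool \<times> 'a) list \<Rightarrow> bool" where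
  "admissible_word G D n ws \<longleftrightarrow>
     ws \<noteq> [] \<and>
     (\<forall>i < length ws. snd (ws ! i) \<in> D) \<and>
     (\<forall>i < length ws. fst (ws ! i) \<noteq> fst (ws ! ((i + 1) mod length ws))
                        \<longrightarrow> snd (ws ! i) \<noteq> \<one>\<^bsub>G\<^esub>) \<and>
     enat (length (filter fst ws)) < n \<and>
     enat (length (filter (\<lambda>w. \<not> fst w) ws)) < n"

definition RF_rel :: "('a, 'b) monoid_scheme \<Rightarrow> 'a set \<Rightarrow> enat \<Rightarrow> 'a \<Rightarrow> bool" where
  "RF_rel G D n a \<longleftrightarrow>
     a \<in> carrier G - D \<and>
     (\<forall>ws. admissible_word G D n ws \<longrightarrow> word_prod G a ws \<noteq> \<one>\<^bsub>G\<^esub>)"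

definition RF_pair :: "('a, 'b) monoid_scheme \<Rightarrow> 'a set \<Rightarrow> enat \<Rightarrow> bool" where
  "RF_pair G D n \<longleftrightarrow> (\<forall>a \<in> carrier G - D. RF_rel G D n a)"

definition malnormal :: "('a, 'b) monoid_scheme \<Rightarrow> 'a set \<Rightarrow> bool" where
  "malnormal G C \<longleftrightarrow>
     (\<forall>a \<in> carrier G - C.
        {a \<otimes>\<^bsub>G\<^esub> c \<otimes>\<^bsub>G\<^esub> inv\<^bsub>G\<^esub> a | c. c \<in> C} \<inter> C = {\<one>\<^bsub>G\<^esub>})"

end

theory Submission
  imports Defs
begin

lemma enat_lt2: "(enat k < 2) = (k < 2)"
  by (simp add: numeral_eq_enat)

lemma len_split: "length ws = length (filter fst ws) + length (filter (\<lambda>w. \<not> fst w) ws)"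
  by (induction ws) auto

lemma key:
  fixes A (structure)
  assumes G: "group A" and S: "subgroup C A" and a: "a \<in> carrier A" "a \<notin> C"
  shows "RF_rel A C 2 a \<longleftrightarrow> (\<forall>c\<in>C. c \<noteq> \<one>\<^bsub>A\<^esub> \<longrightarrow> a \<otimes>\<^bsub>A\<^esub> c \<otimes>\<^bsub>A\<^esub> inv\<^bsub>A\<^esub> a \<notin> C)"
proof -
  interpret group A by (rule G)
  have sub: "\<And>x. x \<in> C \<Longrightarrow> x \<in> carrier A" using S subgroup.subset by blast
  show ?thesis
  proof
    assume R: "RF_rel A C 2 a"
    show "\<forall>c\<in>C. c \<noteq> \<one> \<longrightarrow> a \<otimes> c \<otimes> inv a \<notin> C"
    proof (intro ballI impI notI)
      fix c assume c: "c \<in> C" "c \<noteq> \<one>" and m: "a \<otimes> c \<otimes> inv a \<in> C"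
      define x where "x = a \<otimes> c \<otimes> inv a"
      have cc: "c \<in> carrier A" using sub c by auto
      have xc: "x \<in> carrier A" using x_def a cc by auto
      have x1: "x \<noteq> \<one>"
      proof
        assume "x = \<one>"
        then have "a \<otimes> c \<otimes> inv a \<otimes> a = a" using x_def a by simp
        then have "a \<otimes> c = a" using a cc by (simp add: m_assoc)
        then have "c = \<one>" using a cc
          by (simp add: l_cancel_one)
        with c show False by simp
      qed
      have ix: "inv x \<in> C" unfolding x_def by (rule subgroup.m_inv_closed[OF S m])
      have ix1: "inv x \<noteq> \<one>" using x1 xc by simp
      define ws where "ws = [(True, c), (False, inv x)]"
      have adm: "admissible_word A C 2 ws"
        unfolding admissible_word_def ws_def using c ix ix1
        by (auto simp: enat_lt2 less_Suc_eq)
      have "word_prod A a ws = (a \<otimes> c \<otimes> inv a) \<otimes> inv x"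
        unfolding word_prod_def ws_def using a cc xc
        by (simp add: m_assoc)
      also have "\<dots> = x \<otimes> inv x" unfolding x_def ..
      also have "\<dots> = \<one>" using xc by simp
      finally show False using R adm unfolding RF_rel_def by blast
    qed
  next
    assume H: "\<forall>c\<in>C. c \<noteq> \<one> \<longrightarrow> a \<otimes> c \<otimes> inv a \<notin> C"
    show "RF_rel A C 2 a"
      unfolding RF_rel_def
    proof (intro conjI allI impI)
      show "a \<in> carrier A - C" using a by simp
      fix ws assume adm: "admissible_word A C 2 ws"
      have ne: "ws \<noteq> []" and inC: "\<forall>i < length ws. snd (ws ! i) \<in> C"
        and alt: "\<forall>i < length ws. fst (ws ! i) \<noteq> fst (ws ! ((i + 1) mod length ws))
                        \<longrightarrow> snd (ws ! i) \<noteq> \<one>"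
        and c1: "length (filter fst ws) < 2" and c2: "length (filter (\<lambda>w. \<not> fst w) ws) < 2"
        using adm unfolding admissible_word_def enat_lt2 by auto
      have len: "length ws \<le> 2" using len_split[of ws] c1 c2 by linarith
      show "word_prod A a ws \<noteq> \<one>"
      proof (cases ws)
        case Nil with ne show ?thesis by simp
      next
        case (Cons w1 rest)
        obtain e1 d1 where w1: "w1 = (e1, d1)" by force
        have d1: "d1 \<in> C" using inC Cons w1 by force
        have d1c: "d1 \<in> carrier A" using sub d1 by auto
        show ?thesis
        proof (cases rest)
          case Nil
          show ?thesis
          proof
            assume "word_prod A a ws = \<one>"
            then have eq: "(if e1 then a else inv a) \<otimes> d1 = \<one>"
              using Cons Nil w1 a d1c by (simp add: word_prod_def)
            show False
            proof (cases e1)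
              case True
              with eq have "a \<otimes> d1 = \<one>" using a d1c by simp
              then have "inv d1 = a" using a d1c by (intro inv_equality)
              then have "a = inv d1" by simp
              then have "a \<in> C" using d1 S subgroup.m_inv_closed by metis
              with a show False by simp
            next
              case False
              with eq have "inv a \<otimes> d1 = \<one>" using a d1c by simp
              then have "inv d1 = inv a" using a d1c by (intro inv_equality) auto
              then have "a = d1" using a d1c by (metis inv_inv)
              with a d1 show False by simp
            qed
          qed
        next
          case (Cons w2 rest2)
          have r2: "rest2 = []" using len \<open>ws = w1 # rest\<close> Cons by simp
          obtain e2 d2 where w2: "w2 = (e2, d2)" by force
          have wsE: "ws = [(e1,d1),(e2,d2)]" using \<open>ws = w1 # rest\<close> Cons r2 w1 w2 by simp
          have d2: "d2 \<in> C" using inC wsE by force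
          have d2c: "d2 \<in> carrier A" using sub d2 by auto
          have ne12: "e1 \<noteq> e2" using c1 c2 wsE by (cases e1; cases e2) auto
          have d1n: "d1 \<noteq> \<one>" using alt wsE ne12 by force
          have d2n: "d2 \<noteq> \<one>" using alt wsE ne12 by force
          show ?thesis
          proof
            assume W: "word_prod A a ws = \<one>"
            show False
            proof (cases e1)
              case True
              then have e2: "\<not> e2" using ne12 by simp
              have "a \<otimes> d1 \<otimes> (inv a \<otimes> d2) = \<one>"
                using W wsE True e2 a d1c d2c by (simp add: word_prod_def m_assoc)
              then have "a \<otimes> d1 \<otimes> inv a \<otimes> d2 = \<one>" using a d1c d2c by (simp add: m_assoc)
              then have "inv d2 = a \<otimes> d1 \<otimes> inv a" using a d1c d2c
                by (intro inv_equality) auto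
              then have "a \<otimes> d1 \<otimes> inv a = inv d2" by simp
              then have "a \<otimes> d1 \<otimes> inv a \<in> C" using d2 S subgroup.m_inv_closed by metis
              with H d1 d1n show False by blast
            next
              case False
              then have e2: "e2" using ne12 by simp
              have "inv a \<otimes> d1 \<otimes> (a \<otimes> d2) = \<one>"
                using W wsE False e2 a d1c d2c by (simp add: word_prod_def m_assoc)
              then have "inv a \<otimes> d1 \<otimes> a \<otimes> d2 = \<one>" using a d1c d2c by (simp add: m_assoc)
              then have "inv d2 = inv a \<otimes> d1 \<otimes> a" using a d1c d2c
                by (intro inv_equality) auto
              then have "a \<otimes> inv d2 \<otimes> inv a = a \<otimes> (inv a \<otimes> d1 \<otimes> a) \<otimes> inv a" by simp
              also have "\<dots> = d1" using a d1c by (simp add: m_assoc[symmetric]) (simp add: m_assoc)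
              finally have "a \<otimes> inv d2 \<otimes> inv a \<in> C" using d1 by simp
              moreover have "inv d2 \<in> C" using d2 S subgroup.m_inv_closed by metis
              moreover have "inv d2 \<noteq> \<one>" using d2n d2c by simp
              ultimately show False using H by blast
            qed
          qed
        qed
      qed
    qed
  qed
qed

theorem lemma5p22:
  fixes A :: "('a, 'b) monoid_scheme" and C :: "'a set"
  assumes "group A" and "subgroup C A"
  shows "(\<forall>a \<in> carrier A - C.
            RF_rel A C 2 a \<longleftrightarrow>
            {a \<otimes>\<^bsub>A\<^esub> c \<otimes>\<^bsub>A\<^esub> inv\<^bsub>A\<^esub> a | c. c \<in> C} \<inter> C = {\<one>\<^bsub>A\<^esub>})
       \<and> (RF_pair A C 2 \<longleftrightarrow> malnormal A C)
       \<and> (\<forall>n::enat. 2 \<le> n \<longrightarrow> RF_pair A C n \<longrightarrow> malnormal A C)"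
proof -
  interpret group A by (rule assms(1))
  have one: "\<one>\<^bsub>A\<^esub> \<in> C" using assms(2) subgroup.one_closed by blast
  have sub: "\<And>x. x \<in> C \<Longrightarrow> x \<in> carrier A" using assms(2) subgroup.subset by blast
  have P1: "RF_rel A C 2 a \<longleftrightarrow> {a \<otimes>\<^bsub>A\<^esub> c \<otimes>\<^bsub>A\<^esub> inv\<^bsub>A\<^esub> a | c. c \<in> C} \<inter> C = {\<one>\<^bsub>A\<^esub>}"
    if a: "a \<in> carrier A - C" for a
  proof -
    have ac: "a \<in> carrier A" using a by simp
    have "{a \<otimes>\<^bsub>A\<^esub> c \<otimes>\<^bsub>A\<^esub> inv\<^bsub>A\<^esub> a | c. c \<in> C} \<inter> C = {\<one>\<^bsub>A\<^esub>} \<longleftrightarrow>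
          (\<forall>c\<in>C. c \<noteq> \<one>\<^bsub>A\<^esub> \<longrightarrow> a \<otimes>\<^bsub>A\<^esub> c \<otimes>\<^bsub>A\<^esub> inv\<^bsub>A\<^esub> a \<notin> C)"
    proof
      assume E: "{a \<otimes>\<^bsub>A\<^esub> c \<otimes>\<^bsub>A\<^esub> inv\<^bsub>A\<^esub> a | c. c \<in> C} \<inter> C = {\<one>\<^bsub>A\<^esub>}"
      show "\<forall>c\<in>C. c \<noteq> \<one>\<^bsub>A\<^esub> \<longrightarrow> a \<otimes>\<^bsub>A\<^esub> c \<otimes>\<^bsub>A\<^esub> inv\<^bsub>A\<^esub> a \<notin> C"
      proof (intro ballI impI notI)
        fix c assume c: "c \<in> C" "c \<noteq> \<one>\<^bsub>A\<^esub>" "a \<otimes>\<^bsub>A\<^esub> c \<otimes>\<^bsub>A\<^esub> inv\<^bsub>A\<^esub> a \<in> C"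
        then have "a \<otimes>\<^bsub>A\<^esub> c \<otimes>\<^bsub>A\<^esub> inv\<^bsub>A\<^esub> a = \<one>\<^bsub>A\<^esub>" using E by blast
        then have "a \<otimes>\<^bsub>A\<^esub> c \<otimes>\<^bsub>A\<^esub> inv\<^bsub>A\<^esub> a \<otimes>\<^bsub>A\<^esub> a = a" using ac by simp
        then have "a \<otimes>\<^bsub>A\<^esub> c = a \<otimes>\<^bsub>A\<^esub> \<one>\<^bsub>A\<^esub>" using ac sub[OF c(1)] by (simp add: m_assoc)
        then have "c = \<one>\<^bsub>A\<^esub>" using ac sub[OF c(1)] by simp
        with c show False by simp
      qed
    next
      assume H: "\<forall>c\<in>C. c \<noteq> \<one>\<^bsub>A\<^esub> \<longrightarrow> a \<otimes>\<^bsub>A\<^esub> c \<otimes>\<^bsub>A\<^esub> inv\<^bsub>A\<^esub> a \<notin> C"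
      have "\<one>\<^bsub>A\<^esub> \<in> {a \<otimes>\<^bsub>A\<^esub> c \<otimes>\<^bsub>A\<^esub> inv\<^bsub>A\<^esub> a | c. c \<in> C}"
        using one ac by (intro CollectI exI[of _ "\<one>\<^bsub>A\<^esub>"]) simp
      moreover have "x = \<one>\<^bsub>A\<^esub>" if X: "x \<in> {a \<otimes>\<^bsub>A\<^esub> c \<otimes>\<^bsub>A\<^esub> inv\<^bsub>A\<^esub> a | c. c \<in> C}" "x \<in> C" for x
      proof -
        obtain c where "c \<in> C" "x = a \<otimes>\<^bsub>A\<^esub> c \<otimes>\<^bsub>A\<^esub> inv\<^bsub>A\<^esub> a" using X(1) by blast
        then show ?thesis using H X(2) by (cases "c = \<one>\<^bsub>A\<^esub>") (simp_all add: ac)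
      qed
      ultimately show "{a \<otimes>\<^bsub>A\<^esub> c \<otimes>\<^bsub>A\<^esub> inv\<^bsub>A\<^esub> a | c. c \<in> C} \<inter> C = {\<one>\<^bsub>A\<^esub>}" using one by blast
    qed
    then show ?thesis using key[OF assms ac] a by simp
  qed
  have P2: "RF_pair A C 2 \<longleftrightarrow> malnormal A C"
    unfolding RF_pair_def malnormal_def using P1 by blast
  have mono: "RF_pair A C 2" if "2 \<le> n" "RF_pair A C n" for n :: enat
    unfolding RF_pair_def
  proof
    fix a assume a: "a \<in> carrier A - C"
    have "admissible_word A C n ws" if "admissible_word A C 2 ws" for ws
      using that \<open>2 \<le> n\<close> unfolding admissible_word_def
      using order_less_le_trans by blast
    then show "RF_rel A C 2 a" using \<open>RF_pair A C n\<close> a unfolding RF_pair_def RF_rel_def by blast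
  qed
  have Q1: "\<forall>a \<in> carrier A - C.
            RF_rel A C 2 a \<longleftrightarrow>
            {a \<otimes>\<^bsub>A\<^esub> c \<otimes>\<^bsub>A\<^esub> inv\<^bsub>A\<^esub> a | c. c \<in> C} \<inter> C = {\<one>\<^bsub>A\<^esub>}"
    by (rule ballI) (rule P1)
  have Q3: "\<forall>n::enat. 2 \<le> n \<longrightarrow> RF_pair A C n \<longrightarrow> malnormal A C"
    using mono P2 by blast
  show ?thesis by (intro conjI Q1 P2 Q3)
qed

end
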